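(* There is a constant $C$ such that for all $\varepsilon\in(0,1]$, all $\Gamma\in\mathbb{R}$ and all smooth $\alpha:\mathbb{T}\to\mathbb{T}$ with $\eta:=\|\alpha'\|_\infty\le1$, setting $\gamma^0(r)=(0,\alpha(r),r)$ and $$\mathbf{v}^0(\mathbf{x})=\Gamma\int_{\mathbb{T}}\mathbf{k}^\varepsilon(\mathbf{x}-\gamma^0(r))\times\partial_r\gamma^0(r)\,dr,$$ one has $$\sup_{r\in\mathbb{T}}\big|v_1^0(\gamma^0(r))\big|\le C|\Gamma|\eta\varepsilon^{-1},\qquad \sup_{\mathbf{x}\in\mathbb{T}^3}\big|\partial_3\mathbf{v}^0(\mathbf{x})\big|\le C|\Gamma|\eta\varepsilon^{-2}.$$
   Context: $\mathbb{T}^3=\mathbb{R}^3/\mathbb{Z}^3$, identified with $[-\tfrac12,\tfrac12)^3$. The regularized Biot–Savart kernel is $\mathbf{k}^\varepsilon(\mathbf{x})=\frac{1}{4\pi}\frac{\mathbf{x}}{(|\mathbf{x}|^2+\varepsilon^2)^{3/2}}+\mathbf{h}^\varepsilon(\mathbf{x})$, where $\mathbf{h}^\varepsilon$ is a smooth correction making $\mathbf{k}^\varepsilon$ periodic, with $\mathbf{h}^\varepsilon$ and $\nabla\mathbf{h}^\varepsilon$ bounded uniformly in $\varepsilon$, and each component $k_i^\varepsilon$ is odd in $x_i$ and even in the other two coordinates. $\times$ is the vector cross product in $\mathbb{R}^3$. *)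

theory Defs
  imports "HOL-Analysis.Analysis"
begin

text \<open>C-infinity smoothness (greatest fixed point: differentiable everywhere, and
  the derivative is again smooth).\<close>
coinductive smooth1 :: "(real \<Rightarrow> real) \<Rightarrow> bool" where
  "(\<forall>x. f differentiable at x) \<Longrightarrow> smooth1 (deriv f) \<Longrightarrow> smooth1 f"

coinductive smooth3 :: "(real^3 \<Rightarrow> real^3) \<Rightarrow> bool" where
  "(\<forall>x. f differentiable at x) \<Longrightarrow>
   (\<forall>i. smooth3 (\<lambda>x. frechet_derivative f (at x) (axis i 1))) \<Longrightarrow> smooth3 f"

definition fund_box :: "(real^3) set" where
  "fund_box = {x. \<forall>i. -1/2 \<le> x$i \<and> x$i < 1/2}"

text \<open>Singular (regularized) part of the Biot--Savart kernel.\<close>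
definition bs_main :: "real \<Rightarrow> real^3 \<Rightarrow> real^3" where
  "bs_main \<epsilon> x = (1 / (4 * pi * (norm x ^ 2 + \<epsilon> ^ 2) powr (3/2))) *\<^sub>R x"

definition refl3 :: "3 \<Rightarrow> real^3 \<Rightarrow> real^3" where
  "refl3 j x = (\<chi> l. if l = j then - (x$l) else x$l)"

text \<open>Admissible regularized periodic Biot--Savart kernel family k^\<epsilon>:
  smooth, Z^3-periodic, equal on the fundamental domain to the regularized kernel
  plus a correction h^\<epsilon> = k^\<epsilon> - bs_main \<epsilon> which, together with its partial
  derivatives, is bounded uniformly in \<epsilon>; k_i odd in x_i, even in the others.\<close>
definition admissible_kernel :: "(real \<Rightarrow> real^3 \<Rightarrow> real^3) \<Rightarrow> bool" where
  "admissible_kernel k \<longleftrightarrow>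
     (\<forall>\<epsilon>>0. smooth3 (k \<epsilon>)) \<and>
     (\<forall>\<epsilon>>0. \<forall>x i. k \<epsilon> (x + axis i 1) = k \<epsilon> x) \<and>
     (\<exists>M. \<forall>\<epsilon>>0. \<forall>x\<in>fund_box.
          norm (k \<epsilon> x - bs_main \<epsilon> x) \<le> M \<and>
          (\<forall>i. norm (frechet_derivative (\<lambda>y. k \<epsilon> y - bs_main \<epsilon> y) (at x) (axis i 1)) \<le> M)) \<and>
     (\<forall>\<epsilon>>0. \<forall>x i j. k \<epsilon> (refl3 j x) $ i = (if i = j then -1 else 1) * (k \<epsilon> x $ i))"

definition gamma0 :: "(real \<Rightarrow> real) \<Rightarrow> real \<Rightarrow> real^3" where
  "gamma0 \<alpha> r = vector [0, \<alpha> r, r]"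

definition vel0 :: "(real \<Rightarrow> real^3 \<Rightarrow> real^3) \<Rightarrow> real \<Rightarrow> real \<Rightarrow> (real \<Rightarrow> real) \<Rightarrow> real^3 \<Rightarrow> real^3" where
  "vel0 k \<epsilon> \<Gamma> \<alpha> x = \<Gamma> *\<^sub>R integral {0..1}
      (\<lambda>r. cross3 (k \<epsilon> (x - gamma0 \<alpha> r)) (vector [0, deriv \<alpha> r, 1]))"

end

theory Submission
  imports Defs
begin


lemma vec3_eq: "(x::real^3) = y \<longleftrightarrow> x$1 = y$1 \<and> x$2 = y$2 \<and> x$3 = y$3"
  by (simp add: vec_eq_iff forall_3)

lemma axis_nth3: "(axis i (1::real) :: real^3) $ j = (if j = i then 1 else 0)"
  by (simp add: axis_def)

lemma vector3_axis: "(vector [a, b, c] :: real^3) = a *\<^sub>R axis 1 1 + b *\<^sub>R axis 2 1 + c *\<^sub>R axis 3 1"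
  by (simp add: vec3_eq axis_def)

lemma per_nat:
  fixes K :: "'a::real_vector \<Rightarrow> 'b"
  assumes "\<And>x. K (x + v) = K x"
  shows "K (x + of_nat n *\<^sub>R v) = K x"
proof (induction n arbitrary: x)
  case 0 then show ?case by simp
next
  case (Suc n)
  have "x + of_nat (Suc n) *\<^sub>R v = (x + of_nat n *\<^sub>R v) + v" by (simp add: algebra_simps)
  then have "K (x + of_nat (Suc n) *\<^sub>R v) = K (x + of_nat n *\<^sub>R v)" using assms by metis
  then show ?case using Suc by simp
qed

lemma per_int:
  fixes K :: "'a::real_vector \<Rightarrow> 'b"
  assumes "\<And>x. K (x + v) = K x"
  shows "K (x + of_int n *\<^sub>R v) = K x"
proof (cases "0 \<le> n")
  case True
  then obtain m where "n = int m" by (metis nonneg_eq_int)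
  then show ?thesis using per_nat[of K v, OF assms] by simp
next
  case False
  define m where "m = nat (- n)"
  have m: "n = - int m" using False unfolding m_def by simp
  have "K x = K ((x + of_int n *\<^sub>R v) + of_nat m *\<^sub>R v)" by (simp add: m)
  also have "\<dots> = K (x + of_int n *\<^sub>R v)" by (rule per_nat[of K v, OF assms])
  finally show ?thesis by simp
qed

lemma per_real:
  fixes g :: "real \<Rightarrow> 'b"
  assumes "\<And>x. g (x + 1) = g x"
  shows "g (x + of_int n) = g x"
  using per_int[of g 1 x n] assms by simp

lemma per_vec:
  fixes K :: "real^3 \<Rightarrow> 'b"
  assumes "\<And>x i. K (x + axis i 1) = K x"
  shows "K (x + vector [of_int a, of_int b, of_int c]) = K x"
proof -
  have e: "x + vector [of_int a, of_int b, of_int c] =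
     ((x + of_int a *\<^sub>R axis 1 1) + of_int b *\<^sub>R axis 2 1) + of_int c *\<^sub>R axis 3 1"
    by (simp add: vector3_axis algebra_simps)
  show ?thesis unfolding e
    using per_int[of K "axis _ 1", OF assms] by simp
qed

lemma fd_per:
  fixes K :: "real^3 \<Rightarrow> real^3"
  assumes "\<And>z. K (z + p) = K z" and "K differentiable at (y + p)"
  shows "frechet_derivative K (at y) = frechet_derivative K (at (y + p))"
proof -
  have "((\<lambda>z. K (z + p)) has_derivative frechet_derivative K (at (y + p))) (at y)"
    using assms(2) unfolding frechet_derivative_works
    by (rule has_derivative_compose[of "\<lambda>z. z + p" "\<lambda>h. h", unfolded o_def, rotated])
       (auto intro!: derivative_eq_intros)
  then have hd: "(K has_derivative frechet_derivative K (at (y + p))) (at y)"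
    using assms(1) by simp
  show ?thesis using frechet_derivative_at[OF hd] by simp
qed

lemma norm_cross_le: "norm (cross3 x y) \<le> norm x * norm y"
proof -
  have "(norm (cross3 x y))\<^sup>2 \<le> (norm x * norm y)\<^sup>2"
    using norm_cross_dot[of x y] by (metis le_add_same_cancel1 zero_le_power2)
  then show ?thesis by (simp add: power2_le_iff_abs_le)
qed

lemma bs_deriv:
  fixes y :: "real^3"
  assumes "0 < e"
  defines "u \<equiv> y \<bullet> y + e ^ 2"
  shows "(bs_main e has_derivative (\<lambda>h. (1 / (4 * pi * u powr (3/2))) *\<^sub>R h
      - (3 * (y \<bullet> h) / (4 * pi * u powr (3/2) * u)) *\<^sub>R y)) (at y)"
proof -
  have u: "0 < u" using assms unfolding u_def by (simp add: add_nonneg_pos)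
  have e: "bs_main e = (\<lambda>y. (1 / (4 * pi * (y \<bullet> y + e ^ 2) powr (3/2))) *\<^sub>R y)"
    by (auto simp: bs_main_def power2_norm_eq_inner fun_eq_iff)
  have u': "0 < y \<bullet> y + e ^ 2" using u unfolding u_def .
  show ?thesis unfolding e u_def
    apply (rule derivative_eq_intros refl | simp only: UNIV_I)+
    using u' apply simp
    apply (rule derivative_eq_intros refl has_derivative_ident | simp only: UNIV_I)+
    using u' apply (auto simp: fun_eq_iff inner_commute field_simps)
    done
qed

lemma powr32: "0 < u \<Longrightarrow> u powr (3/2) = u * sqrt u"
proof -
  assume "0 < u"
  have "u powr (3/2) = u powr (1 + 1/2)" by simp
  also have "\<dots> = u powr 1 * u powr (1/2)" by (rule powr_add)
  also have "\<dots> = u * u powr (1/2)" using \<open>0<u\<close> by simp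
  finally show ?thesis using \<open>0<u\<close> by (simp add: powr_half_sqrt)
qed

lemma bs_dbound:
  fixes y h :: "real^3"
  assumes "0 < e"
  defines "u \<equiv> y \<bullet> y + e ^ 2"
  defines "w \<equiv> (y$3)^2 + e^2"
  shows "norm ((1 / (4 * pi * u powr (3/2))) *\<^sub>R h
      - (3 * (y \<bullet> h) / (4 * pi * u powr (3/2) * u)) *\<^sub>R y) \<le> norm h / (w * sqrt w)"
proof -
  have w0: "0 < w" unfolding w_def using assms by (simp add: add_nonneg_pos)
  have yy: "y \<bullet> y = (norm y)^2" by (simp add: power2_norm_eq_inner)
  have wu: "w \<le> u" unfolding w_def u_def yy
    using component_le_norm_cart[of y 3] by (simp add: abs_le_square_iff[symmetric])
  have u0: "0 < u" using w0 wu by linarith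
  define c where "c = 1 / (4 * pi * (u * sqrt u))"
  have c0: "0 < c" unfolding c_def using u0 by simp
  have "norm ((1 / (4 * pi * u powr (3/2))) *\<^sub>R h
      - (3 * (y \<bullet> h) / (4 * pi * u powr (3/2) * u)) *\<^sub>R y)
      \<le> norm (c *\<^sub>R h) + norm ((3 * (y \<bullet> h) / (4 * pi * u powr (3/2) * u)) *\<^sub>R y)"
    unfolding c_def powr32[OF u0] by (rule norm_triangle_ineq4)
  also have "norm ((3 * (y \<bullet> h) / (4 * pi * u powr (3/2) * u)) *\<^sub>R y)
     = 3 * c * \<bar>y \<bullet> h\<bar> * norm y / u"
    unfolding c_def powr32[OF u0] using u0 by (simp add: field_simps abs_mult)
  also have "\<dots> \<le> 3 * c * (norm y * norm h) * norm y / u"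
    using c0 u0 Cauchy_Schwarz_ineq2[of y h]
    by (intro divide_right_mono mult_right_mono mult_left_mono) auto
  also have "3 * c * (norm y * norm h) * norm y / u = 3 * c * norm h * ((norm y)^2 / u)"
    by (simp add: power2_eq_square)
  also have "\<dots> \<le> 3 * c * norm h * 1"
    using c0 u0 unfolding u_def yy by (intro mult_left_mono) (auto simp: field_simps)
  finally have "norm ((1 / (4 * pi * u powr (3/2))) *\<^sub>R h
      - (3 * (y \<bullet> h) / (4 * pi * u powr (3/2) * u)) *\<^sub>R y) \<le> 4 * c * norm h"
    using c0 by simp
  also have "4 * c * norm h \<le> norm h / (u * sqrt u)"
    unfolding c_def using u0 pi_gt3 mult_le_cancel_right1[of "norm h" pi]
    by (simp add: field_simps)
  also have "\<dots> \<le> norm h / (w * sqrt w)"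
    using w0 wu by (intro divide_left_mono mult_mono) auto
  finally show ?thesis .
qed



locale kern =
  fixes K :: "real^3 \<Rightarrow> real^3" and e M :: real
  assumes Kdiff: "\<And>x. K differentiable at x"
  and Kdc: "\<And>i. continuous_on UNIV (\<lambda>x. frechet_derivative K (at x) (axis i 1))"
  and Kper: "\<And>x i. K (x + axis i 1) = K x"
  and Kb: "\<And>x. x \<in> fund_box \<Longrightarrow> norm (K x - bs_main e x) \<le> M"
  and Kdb: "\<And>x i. x \<in> fund_box \<Longrightarrow> norm (frechet_derivative (\<lambda>y. K y - bs_main e y) (at x) (axis i 1)) \<le> M"
  and Ksym: "\<And>x i j. K (refl3 j x) $ i = (if i = j then -1 else 1) * K x $ i"
  and e0: "0 < e" and e1: "e \<le> 1" and M0: "0 \<le> M"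
begin

lemma Kd: "(K has_derivative frechet_derivative K (at y)) (at y)"
  using Kdiff frechet_derivative_works by blast

lemma Kcont: "continuous_on UNIV K"
  by (meson Kdiff differentiable_at_imp_differentiable_on differentiable_imp_continuous_on)

lemma reduce:
  assumes "\<bar>y$3\<bar> \<le> 1/2"
  shows "\<exists>z. z \<in> fund_box \<and> K z = K y \<and> frechet_derivative K (at z) = frechet_derivative K (at y)
     \<and> \<bar>z$3\<bar> = \<bar>y$3\<bar>"
proof -
  define a where "a = \<lfloor>y$1 + 1/2\<rfloor>"
  define b where "b = \<lfloor>y$2 + 1/2\<rfloor>"
  define c where "c = \<lfloor>y$3 + 1/2\<rfloor>"
  define p :: "real^3" where "p = vector [of_int (-a), of_int (-b), of_int (-c)]"
  have Kp: "K (z + p) = K z" for z unfolding p_def by (rule per_vec[OF Kper])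
  have "K (y + p) = K y" by (rule Kp)
  moreover have "frechet_derivative K (at y) = frechet_derivative K (at (y + p))"
    by (rule fd_per[OF Kp Kdiff])
  moreover have fl: "- 1/2 \<le> t - \<lfloor>t + 1/2\<rfloor> \<and> t - \<lfloor>t + 1/2\<rfloor> < 1/2" for t :: real
    using of_int_floor_le[of "t + 1/2"] real_of_int_floor_add_one_gt[of "t + 1/2"] by linarith
  have "y + p \<in> fund_box"
    unfolding fund_box_def p_def a_def b_def c_def using fl by (auto simp: forall_3)
  moreover have "\<bar>(y + p)$3\<bar> = \<bar>y$3\<bar>"
  proof (cases "y$3 < 1/2")
    case True
    then have "c = 0" unfolding c_def using assms by (simp add: floor_eq_iff)
    then show ?thesis by (simp add: p_def)
  next
    case False
    then have "y$3 = 1/2" using assms by linarith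
    then have "y$3 + 1/2 = 1" by simp
    then have "c = 1" unfolding c_def by simp
    then show ?thesis using \<open>y$3 = 1/2\<close> by (simp add: p_def)
  qed
  ultimately show ?thesis by metis
qed

lemma bs_norm: "norm (bs_main e z) \<le> 1 / ((z$3)^2 + e^2)"
proof -
  define u where "u = (norm z)^2 + e^2"
  have w0: "0 < (z$3)^2 + e^2" using e0 by (simp add: add_nonneg_pos)
  have wu: "(z$3)^2 + e^2 \<le> u" unfolding u_def
    using component_le_norm_cart[of z 3] by (simp add: abs_le_square_iff[symmetric])
  have u0: "0 < u" using w0 wu by linarith
  have nz: "norm z \<le> sqrt u" unfolding u_def by (simp add: real_le_rsqrt)
  have "norm (bs_main e z) = norm z / (4 * pi * (u * sqrt u))"
    unfolding bs_main_def u_def[symmetric] powr32[OF u0] using u0 by simp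
  also have "\<dots> \<le> sqrt u / (4 * pi * (u * sqrt u))"
    using u0 by (intro divide_right_mono nz) auto
  also have "\<dots> = 1 / (4 * pi * u)" using u0 by (simp add: field_simps)
  also have "\<dots> \<le> 1 / u" using u0 pi_gt3 by (simp add: field_simps)
  also have "\<dots> \<le> 1 / ((z$3)^2 + e^2)" using w0 wu by (simp add: frac_le)
  finally show ?thesis .
qed

lemma KB0:
  assumes "\<bar>y$3\<bar> \<le> 1/2"
  shows "norm (K y) \<le> M + 1 / ((y$3)^2 + e^2)"
proof -
  obtain z where z: "z \<in> fund_box" "K z = K y" "\<bar>z$3\<bar> = \<bar>y$3\<bar>" using reduce[OF assms] by blast
  have "norm (K z) \<le> norm (K z - bs_main e z) + norm (bs_main e z)"
    using norm_triangle_ineq[of "K z - bs_main e z" "bs_main e z"] by simp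
  also have "\<dots> \<le> M + 1 / ((z$3)^2 + e^2)" using Kb[OF z(1)] bs_norm[of z] by linarith
  also have "(z$3)^2 = (y$3)^2" using z(3) by (metis power2_abs)
  finally show ?thesis using z(2) by simp
qed

definition Dbs :: "real^3 \<Rightarrow> real^3 \<Rightarrow> real^3" where
  "Dbs y h = (1 / (4 * pi * (y \<bullet> y + e ^ 2) powr (3/2))) *\<^sub>R h
      - (3 * (y \<bullet> h) / (4 * pi * (y \<bullet> y + e ^ 2) powr (3/2) * (y \<bullet> y + e ^ 2))) *\<^sub>R y"

lemma DK_decomp:
  "frechet_derivative K (at z) h = frechet_derivative (\<lambda>y. K y - bs_main e y) (at z) h + Dbs z h"
proof -
  have hd: "((\<lambda>y. K y - bs_main e y) has_derivative (\<lambda>h. frechet_derivative K (at z) h - Dbs z h)) (at z)"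
    unfolding Dbs_def by (intro has_derivative_diff Kd bs_deriv e0)
  then have "frechet_derivative (\<lambda>y. K y - bs_main e y) (at z) = (\<lambda>h. frechet_derivative K (at z) h - Dbs z h)"
    using frechet_derivative_at[OF hd] by simp
  then show ?thesis by simp
qed

lemma KB1:
  assumes "\<bar>y$3\<bar> \<le> 1/2"
  shows "norm (frechet_derivative K (at y) (axis i 1)) \<le> M + 1 / (((y$3)^2 + e^2) * sqrt ((y$3)^2 + e^2))"
proof -
  obtain z where z: "z \<in> fund_box" "frechet_derivative K (at z) = frechet_derivative K (at y)" "\<bar>z$3\<bar> = \<bar>y$3\<bar>"
    using reduce[OF assms] by blast
  have "norm (frechet_derivative K (at z) (axis i 1))
     \<le> norm (frechet_derivative (\<lambda>y. K y - bs_main e y) (at z) (axis i 1)) + norm (Dbs z (axis i 1))"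
    unfolding DK_decomp[of z] by (rule norm_triangle_ineq)
  also have "\<dots> \<le> M + norm (axis i (1::real) :: real^3) / (((z$3)^2 + e^2) * sqrt ((z$3)^2 + e^2))"
    using Kdb[OF z(1), of i] bs_dbound[OF e0, of z "axis i 1"] unfolding Dbs_def by linarith
  also have "(z$3)^2 = (y$3)^2" using z(3) by (metis power2_abs)
  finally show ?thesis using z(2) by simp
qed

lemma K2zero: "K (vector [0, 0, s]) $ 2 = 0"
proof -
  have "refl3 2 (vector [0, 0, s]) = vector [0, 0, s]"
    by (simp add: refl3_def vec3_eq)
  then show ?thesis using Ksym[of 2 "vector [0, 0, s]" 2] by simp
qed

lemma K2bound:
  assumes "\<bar>s\<bar> \<le> 1/2"
  shows "\<bar>K (vector [0, t, s]) $ 2\<bar> \<le> \<bar>t\<bar> * (M + 1 / ((s^2 + e^2) * sqrt (s^2 + e^2)))"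
proof -
  define B where "B = M + 1 / ((s^2 + e^2) * sqrt (s^2 + e^2))"
  define f where "f = (\<lambda>\<tau>. K (\<tau> *\<^sub>R axis 2 1 + s *\<^sub>R axis 3 1))"
  have fd: "(f has_derivative (\<lambda>h. h *\<^sub>R frechet_derivative K (at (\<tau> *\<^sub>R axis 2 1 + s *\<^sub>R axis 3 1)) (axis 2 1))) (at \<tau> within UNIV)"
    for \<tau>
  proof -
    let ?p = "\<tau> *\<^sub>R axis 2 1 + s *\<^sub>R axis 3 1 :: real^3"
    have lin: "linear (frechet_derivative K (at ?p))" using Kdiff linear_frechet_derivative by blast
    have "((\<lambda>\<tau>. \<tau> *\<^sub>R axis 2 1 + s *\<^sub>R axis 3 1 :: real^3) has_derivative (\<lambda>h. h *\<^sub>R axis 2 1)) (at \<tau>)"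
      by (auto intro!: derivative_eq_intros)
    from has_derivative_compose[OF this Kd]
    have "(f has_derivative (\<lambda>h. frechet_derivative K (at ?p) (h *\<^sub>R axis 2 1))) (at \<tau>)"
      unfolding f_def o_def .
    then show ?thesis using linear_cmul[OF lin] by simp
  qed
  have "norm (f t - f 0) \<le> B * norm (t - 0)"
  proof (rule differentiable_bound[OF convex_UNIV fd])
    fix \<tau> :: real
    have "norm (frechet_derivative K (at (\<tau> *\<^sub>R axis 2 1 + s *\<^sub>R axis 3 1)) (axis 2 1)) \<le> B"
      unfolding B_def using KB1[of "\<tau> *\<^sub>R axis 2 1 + s *\<^sub>R axis 3 1" 2] assms by (simp add: axis_def)
    then show "onorm (\<lambda>h. h *\<^sub>R frechet_derivative K (at (\<tau> *\<^sub>R axis 2 1 + s *\<^sub>R axis 3 1)) (axis 2 1)) \<le> B"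
    proof (intro onorm_le)
      fix x :: real
      show "norm (x *\<^sub>R frechet_derivative K (at (\<tau> *\<^sub>R axis 2 1 + s *\<^sub>R axis 3 1)) (axis 2 1)) \<le> B * norm x"
        using \<open>norm _ \<le> B\<close> unfolding norm_scaleR real_norm_def
        by (metis abs_ge_zero mult.commute mult_right_mono)
    qed
  qed auto
  moreover have "f t = K (vector [0, t, s])" "f 0 = K (vector [0, 0, s])"
    unfolding f_def by (simp_all add: vector3_axis)
  ultimately have "norm (K (vector [0, t, s]) - K (vector [0, 0, s])) \<le> B * \<bar>t\<bar>" by simp
  moreover have "\<bar>(K (vector [0, t, s]) - K (vector [0, 0, s])) $ 2\<bar> \<le> norm (K (vector [0, t, s]) - K (vector [0, 0, s]))"
    by (rule component_le_norm_cart)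
  ultimately show ?thesis using K2zero[of s] unfolding B_def by (simp add: mult.commute)
qed

end


lemma Jint:
  fixes c e :: real
  assumes "0 < e"
  shows "((\<lambda>r. 1 / ((c - r)^2 + e^2)) has_integral (2 * arctan (1 / (2 * e)) / e)) {c - 1/2..c + 1/2}"
proof -
  define k where "k = 1 / e"
  define F where "F r = - arctan ((c - r) * k) * k" for r
  have d: "(F has_vector_derivative (1 / ((c - r)^2 + e^2))) (at r within {c - 1/2..c + 1/2})" for r
  proof -
    have "((\<lambda>r. (c - r) * k) has_real_derivative (- k)) (at r)"
      by (auto intro!: derivative_eq_intros)
    from DERIV_chain2[OF DERIV_arctan this]
    have "((\<lambda>r. arctan ((c - r) * k)) has_real_derivative (inverse (1 + ((c - r) * k)\<^sup>2) * - k)) (at r)" .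
    from DERIV_cmult[OF this, of "- k"]
    have "(F has_real_derivative (- k * (inverse (1 + ((c - r) * k)\<^sup>2) * - k))) (at r)"
      unfolding F_def by (simp add: mult.commute)
    moreover have "- k * (inverse (1 + ((c - r) * k)\<^sup>2) * - k) = 1 / ((c - r)^2 + e^2)"
      unfolding k_def using assms by (simp add: field_simps power2_eq_square)
    ultimately show ?thesis
      using has_real_derivative_iff_has_vector_derivative has_vector_derivative_at_within by metis
  qed
  have "((\<lambda>r. 1 / ((c - r)^2 + e^2)) has_integral (F (c + 1/2) - F (c - 1/2))) {c - 1/2..c + 1/2}"
    by (rule fundamental_theorem_of_calculus) (use d in auto)
  moreover have "F (c + 1/2) - F (c - 1/2) = 2 * arctan (1 / (2 * e)) / e"
    unfolding F_def k_def by (simp add: arctan_minus field_simps)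
  ultimately show ?thesis by simp
qed

lemma Jint_le:
  fixes c e :: real
  assumes "0 < e"
  shows "(\<lambda>r. 1 / ((c - r)^2 + e^2)) integrable_on {c - 1/2..c + 1/2}"
    "integral {c - 1/2..c + 1/2} (\<lambda>r. 1 / ((c - r)^2 + e^2)) \<le> pi / e"
proof -
  show "(\<lambda>r. 1 / ((c - r)^2 + e^2)) integrable_on {c - 1/2..c + 1/2}"
    using Jint[OF assms] by blast
  have "integral {c - 1/2..c + 1/2} (\<lambda>r. 1 / ((c - r)^2 + e^2)) = 2 * arctan (1 / (2 * e)) / e"
    using Jint[OF assms] by (rule integral_unique)
  also have "\<dots> \<le> pi / e"
    using arctan_ubound[of "1 / (2 * e)"] assms by (simp add: divide_right_mono)
  finally show "integral {c - 1/2..c + 1/2} (\<lambda>r. 1 / ((c - r)^2 + e^2)) \<le> pi / e" .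
qed

lemma shift_int:
  fixes f :: "real \<Rightarrow> 'a::euclidean_space"
  assumes cont: "continuous_on UNIV f" and per: "\<And>x. f (x + 1) = f x"
  shows "integral {a..a+1} f = integral {0..1} f"
proof -
  define n where "n = \<lfloor>a\<rfloor>"
  define t where "t = a - of_int n"
  have t: "0 \<le> t" "t \<le> 1" unfolding t_def n_def
    using of_int_floor_le[of a] real_of_int_floor_add_one_gt[of a] by linarith+
  have int: "f integrable_on {u..v}" for u v
    by (rule integrable_continuous_interval) (rule continuous_on_subset[OF cont], simp)
  have fn: "f \<circ> (+) (of_int m) = f" for m :: int
    by (rule ext) (simp add: add.commute per_real[of f, OF per])
  have "integral {a..a+1} f = integral {t + of_int n..t + 1 + of_int n} f"
    unfolding t_def by simp
  also have "\<dots> = integral {t..t+1} (f \<circ> (+) (of_int n))"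
    by (rule integral_shift_Icc_real[symmetric])
  also have "\<dots> = integral {t..t+1} f" by (simp only: fn)
  also have "\<dots> = integral {t..1} f + integral {1..t+1} f"
    using Henstock_Kurzweil_Integration.integral_combine[where a=t and c=1 and b="t+1" and f=f] t int by simp
  also have "integral {1..t+1} f = integral {0..t} (f \<circ> (+) (of_int 1))"
    using integral_shift_Icc_real[of 0 t f 1] by (simp add: add.commute)
  also have "\<dots> = integral {0..t} f" by (simp only: fn)
  also have "integral {t..1} f + integral {0..t} f = integral {0..1} f"
    using t Henstock_Kurzweil_Integration.integral_combine[where a=0 and c=t and b=1 and f=f] int by (simp add: add.commute)
  finally show ?thesis .
qed



lemma bl_cross: "bounded_linear (\<lambda>v. cross3 v c)"
proof -
  have "linear (\<lambda>v. cross3 v c)" using bilinear_cross unfolding bilinear_def by blast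
  then show ?thesis using linear_conv_bounded_linear by blast
qed

locale curve = kern +
  fixes \<alpha> :: "real \<Rightarrow> real" and \<eta> :: real and m :: int
  assumes adiff: "\<And>r. (\<alpha> has_real_derivative deriv \<alpha> r) (at r)"
  and a'cont: "continuous_on UNIV (deriv \<alpha>)"
  and aper: "\<And>r. \<alpha> (r + 1) = \<alpha> r + of_int m"
  and a'per: "\<And>r. deriv \<alpha> (r + 1) = deriv \<alpha> r"
  and a'bd: "\<And>r. \<bar>deriv \<alpha> r\<bar> \<le> \<eta>"
  and eta1: "\<eta> \<le> 1"
begin

abbreviation "g r \<equiv> vector [0, deriv \<alpha> r, 1] :: real^3"

lemma eta0: "0 \<le> \<eta>" using a'bd[of 0] by linarith

lemma gamma_eq: "gamma0 \<alpha> r = \<alpha> r *\<^sub>R axis 2 1 + r *\<^sub>R axis 3 1"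
  unfolding gamma0_def by (simp add: vector3_axis)

lemma g_eq: "g r = deriv \<alpha> r *\<^sub>R axis 2 1 + axis 3 1"
  by (simp add: vector3_axis)

lemma acont: "continuous_on UNIV \<alpha>"
  using adiff by (meson DERIV_isCont continuous_at_imp_continuous_on)

lemma gamma_cont: "continuous_on UNIV (gamma0 \<alpha>)"
  unfolding gamma_eq[abs_def] by (intro continuous_intros acont)

lemma g_cont: "continuous_on UNIV g"
  unfolding g_eq by (intro continuous_intros a'cont)

lemma gamma_deriv: "(gamma0 \<alpha> has_vector_derivative g r) (at r)"
  unfolding gamma_eq[abs_def] g_eq
  using adiff[of r] by (auto intro!: derivative_eq_intros)

lemma K_shift: "K (y - vector [0, of_int m, 1]) = K y"
proof -
  have "y - vector [0, of_int m, 1] = y + vector [of_int 0, of_int (-m), of_int (-1)]"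
    by (simp add: vec3_eq)
  then show ?thesis using per_vec[OF Kper] by metis
qed

lemma gamma_per: "gamma0 \<alpha> (r + 1) = gamma0 \<alpha> r + vector [0, of_int m, 1]"
  unfolding gamma0_def by (simp add: vec3_eq aper)

lemma Kgamma_per: "K (x - gamma0 \<alpha> (r + 1)) = K (x - gamma0 \<alpha> r)"
proof -
  have "x - gamma0 \<alpha> (r + 1) = (x - gamma0 \<alpha> r) - vector [0, of_int m, 1]"
    unfolding gamma_per by (simp add: algebra_simps)
  then show ?thesis using K_shift[of "x - gamma0 \<alpha> r"] by metis
qed

lemma alpha_lip: "\<bar>\<alpha> a - \<alpha> b\<bar> \<le> \<eta> * \<bar>a - b\<bar>"
proof -
  have "norm (\<alpha> a - \<alpha> b) \<le> \<eta> * norm (a - b)"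
    by (rule field_differentiable_bound[OF convex_UNIV, of \<alpha> "deriv \<alpha>"])
       (use adiff a'bd has_field_derivative_at_within in auto)
  then show ?thesis by simp
qed

lemma g_norm: "norm (g r) \<le> 2"
proof -
  have "norm (g r) \<le> norm (deriv \<alpha> r *\<^sub>R (axis 2 1 :: real^3)) + norm (axis 3 1 :: real^3)"
    unfolding g_eq by (rule norm_triangle_ineq)
  also have "\<dots> \<le> 2" using a'bd[of r] eta1 by simp
  finally show ?thesis .
qed

end


lemma bnd_int:
  fixes c e A B :: real
  assumes "0 < e" "0 \<le> B"
  shows "(\<lambda>r. A + B * (1 / ((c - r)^2 + e^2))) integrable_on {c - 1/2..c + 1/2}"
    and "integral {c - 1/2..c + 1/2} (\<lambda>r. A + B * (1 / ((c - r)^2 + e^2))) \<le> A + B * (pi / e)"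
proof -
  have hc: "((\<lambda>r. A) has_integral A) {c - 1/2..c + 1/2}"
    using has_integral_const_real[of A "c - 1/2" "c + 1/2"] by simp
  have h: "((\<lambda>r. A + B * (1 / ((c - r)^2 + e^2))) has_integral (A + B * (2 * arctan (1 / (2 * e)) / e))) {c - 1/2..c + 1/2}"
    by (intro has_integral_add hc has_integral_mult_right Jint assms)
  then show "(\<lambda>r. A + B * (1 / ((c - r)^2 + e^2))) integrable_on {c - 1/2..c + 1/2}" by blast
  have ar: "2 * arctan (1 / (2 * e)) / e \<le> pi / e"
    using arctan_ubound[of "1 / (2 * e)"] assms by (simp add: divide_right_mono)
  have "A + B * (2 * arctan (1 / (2 * e)) / e) \<le> A + B * (pi / e)"
    using mult_left_mono[OF ar assms(2)] by linarith
  then show "integral {c - 1/2..c + 1/2} (\<lambda>r. A + B * (1 / ((c - r)^2 + e^2))) \<le> A + B * (pi / e)"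
    using integral_unique[OF h] by simp
qed

context curve begin

lemma F_cont: "continuous_on UNIV (\<lambda>r. cross3 (K (x - gamma0 \<alpha> r)) (g r))"
  by (intro continuous_on_cross continuous_on_compose2[OF Kcont] continuous_intros gamma_cont g_cont) auto

lemma F_per: "cross3 (K (x - gamma0 \<alpha> (r + 1))) (g (r + 1)) = cross3 (K (x - gamma0 \<alpha> r)) (g r)"
  using Kgamma_per a'per by simp

lemma sqrt_w: "\<bar>s\<bar> \<le> sqrt (s^2 + e^2)" "e \<le> sqrt (s^2 + e^2)"
  using e0 by (auto intro: real_le_rsqrt simp: abs_le_square_iff)

lemma pw1:
  assumes s: "\<bar>s\<bar> \<le> 1/2"
  shows "\<bar>s\<bar> * (M + 1 / ((s^2 + e^2) * sqrt (s^2 + e^2))) \<le> M + 1 / (s^2 + e^2)"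
proof -
  define w where "w = s^2 + e^2"
  have w0: "0 < w" unfolding w_def using e0 by (simp add: add_nonneg_pos)
  have sw: "\<bar>s\<bar> \<le> sqrt w" unfolding w_def by (rule sqrt_w)
  have sq0: "0 < sqrt w" using w0 by simp
  have "\<bar>s\<bar> * M \<le> M" using s M0 by (simp add: mult_left_le_one_le)
  moreover have "\<bar>s\<bar> * (1 / (w * sqrt w)) \<le> 1 / w"
  proof -
    have "\<bar>s\<bar> * (1 / (w * sqrt w)) \<le> sqrt w * (1 / (w * sqrt w))"
      using sw w0 sq0 by (intro mult_right_mono) auto
    also have "\<dots> = 1 / w" using w0 sq0 by (simp add: field_simps)
    finally show ?thesis .
  qed
  ultimately show ?thesis unfolding w_def[symmetric] by (simp add: distrib_left)
qed

lemma claim1: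
  "\<bar>(integral {0..1} (\<lambda>r. cross3 (K (gamma0 \<alpha> r0 - gamma0 \<alpha> r)) (g r))) $ 1\<bar> \<le> 2 * \<eta> * M + (2 * \<eta>) * (pi / e)"
proof -
  let ?F = "\<lambda>r. cross3 (K (gamma0 \<alpha> r0 - gamma0 \<alpha> r)) (g r)"
  let ?S = "{r0 - 1/2..r0 + 1/2}"
  have I: "integral {0..1} ?F = integral ?S ?F"
    using shift_int[OF F_cont F_per, of "r0 - 1/2"] by (simp add: algebra_simps)
  have intF: "?F integrable_on ?S"
    by (rule integrable_continuous_interval) (rule continuous_on_subset[OF F_cont], simp)
  have comp: "(integral ?S ?F) $ 1 = integral ?S (\<lambda>r. ?F r $ 1)"
    by (rule integral_component_eq_cart[symmetric, OF intF])
  have intF1: "(\<lambda>r. ?F r $ 1) integrable_on ?S"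
    using has_integral_linear[OF integrable_integral[OF intF] bounded_linear_vec_nth[of 1]]
    unfolding o_def by blast
  let ?b = "\<lambda>r. 2 * \<eta> * M + (2 * \<eta>) * (1 / ((r0 - r)^2 + e^2))"
  have pw: "norm (?F r $ 1) \<le> ?b r" if r: "r \<in> ?S" for r
  proof -
    define s where "s = r0 - r"
    have "r0 - 1/2 \<le> r" "r \<le> r0 + 1/2" using r by auto
    then have s: "\<bar>s\<bar> \<le> 1/2" unfolding s_def by linarith
    define y where "y = gamma0 \<alpha> r0 - gamma0 \<alpha> r"
    have y: "y = vector [0, \<alpha> r0 - \<alpha> r, s]" unfolding y_def s_def gamma0_def by (simp add: vec3_eq)
    have F1: "?F r $ 1 = K y $ 2 - K y $ 3 * deriv \<alpha> r"
      unfolding y_def by (simp add: cross3_def)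
    have h1: "\<bar>K y $ 2\<bar> \<le> \<bar>\<alpha> r0 - \<alpha> r\<bar> * (M + 1 / ((s^2 + e^2) * sqrt (s^2 + e^2)))"
      unfolding y by (rule K2bound[OF s])
    have B0: "0 \<le> M + 1 / ((s^2 + e^2) * sqrt (s^2 + e^2))" using M0 by simp
    have "\<bar>K y $ 2\<bar> \<le> \<eta> * \<bar>s\<bar> * (M + 1 / ((s^2 + e^2) * sqrt (s^2 + e^2)))"
      using h1 mult_right_mono[OF alpha_lip[of r0 r] B0] unfolding s_def by linarith
    also have "\<dots> \<le> \<eta> * (M + 1 / (s^2 + e^2))"
      using pw1[OF s] eta0 by (simp add: mult.assoc mult_left_mono)
    finally have h2: "\<bar>K y $ 2\<bar> \<le> \<eta> * (M + 1 / (s^2 + e^2))" .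
    have "\<bar>K y $ 3\<bar> \<le> M + 1 / (s^2 + e^2)"
      using component_le_norm_cart[of "K y" 3] KB0[of y] s y by simp
    then have h3: "\<bar>K y $ 3 * deriv \<alpha> r\<bar> \<le> (M + 1 / (s^2 + e^2)) * \<eta>"
      unfolding abs_mult using a'bd[of r] by (intro mult_mono) auto
    have "norm (?F r $ 1) \<le> \<bar>K y $ 2\<bar> + \<bar>K y $ 3 * deriv \<alpha> r\<bar>" unfolding F1 by simp
    also have "\<dots> \<le> 2 * (\<eta> * (M + 1 / (s^2 + e^2)))"
      using h2 h3[unfolded mult.commute[of "M + _" \<eta>]] by linarith
    also have "\<dots> = ?b r" unfolding s_def by (simp add: algebra_simps)
    finally show ?thesis .
  qed
  have "\<bar>(integral {0..1} ?F) $ 1\<bar> = norm (integral ?S (\<lambda>r. ?F r $ 1))" unfolding I comp by simp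
  also have "\<dots> \<le> integral ?S ?b"
    by (rule integral_norm_bound_integral[OF intF1 bnd_int(1)[OF e0] pw]) (use eta0 in auto)
  also have "\<dots> \<le> 2 * \<eta> * M + (2 * \<eta>) * (pi / e)"
    by (rule bnd_int(2)[OF e0]) (use eta0 in auto)
  finally show ?thesis .
qed

end


lemma cross_ident:
  fixes u2 u3 e2 e3 :: "real^3"
  shows "cross3 u3 (c *\<^sub>R e2 + e3) = (- cross3 (-(c *\<^sub>R u2 + u3)) (c *\<^sub>R e2) - c *\<^sub>R cross3 u2 (c *\<^sub>R e2 + e3)) - cross3 (-(c *\<^sub>R u2 + u3)) e3"
  by (simp add: cross3_simps)

context curve begin

lemma DKlin: "linear (frechet_derivative K (at z))"
  using Kdiff linear_frechet_derivative by blast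

lemma H_cont: "continuous_on UNIV (\<lambda>r. cross3 (frechet_derivative K (at (x - gamma0 \<alpha> r)) (axis i 1)) (g r))"
  by (intro continuous_on_cross continuous_on_compose2[OF Kdc] continuous_intros gamma_cont g_cont) auto

lemma DK_gper: "frechet_derivative K (at (x - gamma0 \<alpha> (r + 1))) = frechet_derivative K (at (x - gamma0 \<alpha> r))"
proof -
  have Kp: "K (z + vector [0, of_int m, 1]) = K z" for z
    using K_shift[of "z + vector [0, of_int m, 1]"] by simp
  have e: "x - gamma0 \<alpha> (r + 1) + vector [0, of_int m, 1] = x - gamma0 \<alpha> r"
    unfolding gamma_per by simp
  have h: "frechet_derivative K (at (x - gamma0 \<alpha> (r + 1))) = frechet_derivative K (at (x - gamma0 \<alpha> (r + 1) + vector [0, of_int m, 1]))"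
    by (rule fd_per[OF Kp Kdiff])
  show ?thesis using h unfolding e .
qed

lemma H_per: "cross3 (frechet_derivative K (at (x - gamma0 \<alpha> (r + 1))) (axis i 1)) (g (r + 1))
   = cross3 (frechet_derivative K (at (x - gamma0 \<alpha> r)) (axis i 1)) (g r)"
  using DK_gper a'per by simp

lemma leib:
  "((\<lambda>t. integral {0..1} (\<lambda>r. cross3 (K (x + t *\<^sub>R axis 3 1 - gamma0 \<alpha> r)) (g r))) has_vector_derivative
     integral {0..1} (\<lambda>r. cross3 (frechet_derivative K (at (x - gamma0 \<alpha> r)) (axis 3 1)) (g r))) (at 0)"
proof -
  let ?f = "\<lambda>t r. cross3 (K (x + t *\<^sub>R axis 3 1 - gamma0 \<alpha> r)) (g r)"
  let ?fx = "\<lambda>t r. cross3 (frechet_derivative K (at (x + t *\<^sub>R axis 3 1 - gamma0 \<alpha> r)) (axis 3 1)) (g r)"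
  have fc: "continuous_on UNIV (\<lambda>p. ?fx (fst p) (snd p))"
    by (intro continuous_on_cross continuous_on_compose2[OF Kdc] continuous_on_compose2[OF gamma_cont]
        continuous_on_compose2[OF g_cont] continuous_intros) auto
  have "((\<lambda>t. integral (cbox 0 1) (?f t)) has_vector_derivative integral (cbox 0 1) (?fx 0)) (at 0 within UNIV)"
  proof (rule leibniz_rule_vector_derivative[where U=UNIV and a=0 and b=1 and f="?f" and fx="?fx"])
    fix t r :: real
    have inner: "((\<lambda>t. x + t *\<^sub>R axis 3 1 - gamma0 \<alpha> r) has_vector_derivative axis 3 1) (at t within UNIV)"
      by (auto intro!: derivative_eq_intros)
    have "((K \<circ> (\<lambda>t. x + t *\<^sub>R axis 3 1 - gamma0 \<alpha> r)) has_vector_derivative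
        frechet_derivative K (at (x + t *\<^sub>R axis 3 1 - gamma0 \<alpha> r)) (axis 3 1)) (at t within UNIV)"
      by (rule vector_derivative_diff_chain_within[OF inner has_derivative_at_withinI[OF Kd]])
    from bounded_linear.has_vector_derivative[OF bl_cross this, of "g r"]
    show "((\<lambda>t. ?f t r) has_vector_derivative ?fx t r) (at t within UNIV)" by (simp add: o_def)
  next
    fix t :: real
    show "?f t integrable_on cbox 0 1"
      unfolding cbox_interval
      by (intro integrable_continuous_interval continuous_on_cross continuous_on_compose2[OF Kcont]
          continuous_intros continuous_on_subset[OF gamma_cont] continuous_on_subset[OF g_cont]) auto
  next
    show "continuous_on (UNIV \<times> cbox 0 1) (\<lambda>(t, r). ?fx t r)"
      using continuous_on_subset[OF fc] by (simp add: case_prod_beta')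
  qed auto
  then show ?thesis by (simp add: cbox_interval)
qed

lemma Dbound:
  "norm (integral {0..1} (\<lambda>r. cross3 (frechet_derivative K (at (x - gamma0 \<alpha> r)) (axis 3 1)) (g r)))
     \<le> 4 * \<eta> * M + (4 * \<eta> / e) * (pi / e)"
proof -
  let ?DK = "\<lambda>r i. frechet_derivative K (at (x - gamma0 \<alpha> r)) (axis i 1)"
  let ?H = "\<lambda>r. cross3 (?DK r 3) (g r)"
  let ?S = "{x$3 - 1/2..x$3 + 1/2}"
  let ?e2 = "axis 2 1 :: real^3" and ?e3 = "axis 3 1 :: real^3"
  define \<phi>' where "\<phi>' r = - (deriv \<alpha> r *\<^sub>R ?DK r 2 + ?DK r 3)" for r
  define R where "R r = - cross3 (\<phi>' r) (deriv \<alpha> r *\<^sub>R ?e2) - deriv \<alpha> r *\<^sub>R cross3 (?DK r 2) (g r)" for r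
  have I: "integral {0..1} ?H = integral ?S ?H"
    using shift_int[OF H_cont H_per, of "x$3 - 1/2"] by (simp add: algebra_simps)
  have intH: "?H integrable_on ?S"
    by (rule integrable_continuous_interval) (rule continuous_on_subset[OF H_cont], simp)
  have DKg: "frechet_derivative K (at (x - gamma0 \<alpha> r)) (g r) = deriv \<alpha> r *\<^sub>R ?DK r 2 + ?DK r 3" for r
    unfolding g_eq using DKlin by (simp add: linear_add linear_cmul)
  have \<phi>d: "((\<lambda>r. K (x - gamma0 \<alpha> r)) has_vector_derivative \<phi>' r) (at r within ?S)" for r
  proof -
    have inner: "((\<lambda>r. x - gamma0 \<alpha> r) has_vector_derivative - g r) (at r within ?S)"
    proof -
      have "((\<lambda>r. x - gamma0 \<alpha> r) has_vector_derivative 0 - g r) (at r)"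
        by (rule has_vector_derivative_diff[OF has_vector_derivative_const gamma_deriv])
      then show ?thesis using has_vector_derivative_at_within by fastforce
    qed
    have "((K \<circ> (\<lambda>r. x - gamma0 \<alpha> r)) has_vector_derivative
        frechet_derivative K (at (x - gamma0 \<alpha> r)) (- g r)) (at r within ?S)"
      by (rule vector_derivative_diff_chain_within[OF inner has_derivative_at_withinI[OF Kd]])
    moreover have "frechet_derivative K (at (x - gamma0 \<alpha> r)) (- g r) = \<phi>' r"
      unfolding \<phi>'_def using DKg[of r] linear_neg[OF DKlin] by simp
    ultimately show ?thesis by (simp add: o_def)
  qed
  have "(\<phi>' has_integral (K (x - gamma0 \<alpha> (x$3 + 1/2)) - K (x - gamma0 \<alpha> (x$3 - 1/2)))) ?S"
    by (rule fundamental_theorem_of_calculus) (use \<phi>d in auto)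
  moreover have "K (x - gamma0 \<alpha> (x$3 + 1/2)) = K (x - gamma0 \<alpha> (x$3 - 1/2))"
  proof -
    have "x$3 - 1/2 + 1 = x$3 + 1/2" by simp
    then show ?thesis using Kgamma_per[of x "x$3 - 1/2"] by metis
  qed
  ultimately have \<phi>i: "(\<phi>' has_integral 0) ?S" by simp
  have ci: "((\<lambda>r. cross3 (\<phi>' r) ?e3) has_integral 0) ?S"
    using has_integral_linear[OF \<phi>i bl_cross[of ?e3]] by (simp add: o_def)
  have Rdef: "R r = ?H r + cross3 (\<phi>' r) ?e3" for r
    unfolding R_def \<phi>'_def g_eq using cross_ident[of "?DK r 3" "deriv \<alpha> r" ?e2 ?e3 "?DK r 2"]
    by (simp add: algebra_simps)
  have Ri: "(R has_integral integral ?S ?H) ?S"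
    unfolding Rdef using has_integral_add[OF integrable_integral[OF intH] ci] by simp
  let ?b = "\<lambda>r. 4 * \<eta> * M + (4 * \<eta> / e) * (1 / ((x$3 - r)^2 + e^2))"
  have pw: "norm (R r) \<le> ?b r" if r: "r \<in> ?S" for r
  proof -
    define s where "s = x$3 - r"
    have "x$3 - 1/2 \<le> r" "r \<le> x$3 + 1/2" using r by auto
    then have s: "\<bar>s\<bar> \<le> 1/2" unfolding s_def by linarith
    define w where "w = s^2 + e^2"
    have w0: "0 < w" unfolding w_def using e0 by (simp add: add_nonneg_pos)
    have y3: "(x - gamma0 \<alpha> r) $ 3 = s" unfolding s_def gamma0_def by simp
    define B where "B = M + 1 / (w * sqrt w)"
    have B0: "0 \<le> B" unfolding B_def using M0 w0 by simp
    have n2: "norm (?DK r 2) \<le> B" and n3: "norm (?DK r 3) \<le> B"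
      unfolding B_def w_def using KB1[of "x - gamma0 \<alpha> r"] y3 s by auto
    have Bb: "B \<le> M + (1 / e) * (1 / w)"
    proof -
      have "e \<le> sqrt w" unfolding w_def by (rule sqrt_w)
      then have "w * e \<le> w * sqrt w" using w0 by simp
      then have "1 / (w * sqrt w) \<le> 1 / (w * e)" using w0 e0 by (intro divide_left_mono) auto
      then show ?thesis unfolding B_def by (simp add: mult.commute)
    qed
    have c: "\<bar>deriv \<alpha> r\<bar> \<le> \<eta>" by (rule a'bd)
    have n\<phi>: "norm (\<phi>' r) \<le> 2 * B"
    proof -
      have "norm (\<phi>' r) \<le> \<bar>deriv \<alpha> r\<bar> * norm (?DK r 2) + norm (?DK r 3)"
        unfolding \<phi>'_def norm_minus_cancel using norm_triangle_ineq[of "deriv \<alpha> r *\<^sub>R ?DK r 2" "?DK r 3"] by simp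
      also have "\<dots> \<le> 1 * B + B"
        using c eta1 n2 n3 by (intro add_mono mult_mono) auto
      finally show ?thesis by simp
    qed
    have t1: "norm (cross3 (\<phi>' r) (deriv \<alpha> r *\<^sub>R ?e2)) \<le> 2 * B * \<eta>"
    proof -
      have "norm (cross3 (\<phi>' r) (deriv \<alpha> r *\<^sub>R ?e2)) \<le> norm (\<phi>' r) * norm (deriv \<alpha> r *\<^sub>R ?e2)"
        by (rule norm_cross_le)
      also have "\<dots> \<le> (2 * B) * \<eta>" using n\<phi> c B0 by (intro mult_mono) auto
      finally show ?thesis by simp
    qed
    have t2: "norm (deriv \<alpha> r *\<^sub>R cross3 (?DK r 2) (g r)) \<le> \<eta> * (B * 2)"
    proof -
      have "norm (deriv \<alpha> r *\<^sub>R cross3 (?DK r 2) (g r)) = \<bar>deriv \<alpha> r\<bar> * norm (cross3 (?DK r 2) (g r))" by simp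
      also have "\<dots> \<le> \<eta> * (B * 2)"
        using c norm_cross_le[of "?DK r 2" "g r"] mult_mono[OF n2 g_norm[of r]] B0
        by (intro mult_mono) auto
      finally show ?thesis .
    qed
    have "norm (R r) \<le> norm (cross3 (\<phi>' r) (deriv \<alpha> r *\<^sub>R ?e2)) + norm (deriv \<alpha> r *\<^sub>R cross3 (?DK r 2) (g r))"
      unfolding R_def by (rule order_trans[OF norm_triangle_ineq4]) (simp only: norm_minus_cancel order_refl)
    also have "\<dots> \<le> 4 * \<eta> * B" using t1 t2 by (simp add: algebra_simps)
    also have "\<dots> \<le> 4 * \<eta> * (M + (1 / e) * (1 / w))" using Bb eta0 by (intro mult_left_mono) auto
    also have "\<dots> = ?b r" unfolding w_def s_def by (simp add: algebra_simps)
    finally show ?thesis .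
  qed
  have "norm (integral {0..1} ?H) = norm (integral ?S R)" unfolding I using integral_unique[OF Ri] by simp
  also have "\<dots> \<le> integral ?S ?b"
    by (rule integral_norm_bound_integral[OF _ bnd_int(1)[OF e0] pw]) (use Ri eta0 e0 in auto)
  also have "\<dots> \<le> 4 * \<eta> * M + (4 * \<eta> / e) * (pi / e)"
    by (rule bnd_int(2)[OF e0]) (use eta0 e0 in auto)
  finally show ?thesis .
qed

end


lemma ints_sep: "(a::real) \<in> \<int> \<Longrightarrow> b \<in> \<int> \<Longrightarrow> a \<noteq> b \<Longrightarrow> 1 \<le> \<bar>a - b\<bar>"
proof -
  assume "a \<in> \<int>" "b \<in> \<int>" "a \<noteq> b"
  then obtain i j where "a = of_int i" "b = of_int j" "i \<noteq> j" by (metis Ints_cases)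
  then have "1 \<le> \<bar>i - j\<bar>" by simp
  then have "(1::real) \<le> of_int \<bar>i - j\<bar>" by linarith
  then show ?thesis using \<open>a = of_int i\<close> \<open>b = of_int j\<close> by simp
qed

lemma alpha_facts:
  assumes sm: "smooth1 \<alpha>" and ai: "\<forall>r. \<alpha> (r + 1) - \<alpha> r \<in> \<int>"
  shows "\<exists>m::int. (\<forall>r. (\<alpha> has_real_derivative deriv \<alpha> r) (at r)) \<and> continuous_on UNIV (deriv \<alpha>)
     \<and> (\<forall>r. \<alpha> (r + 1) = \<alpha> r + of_int m) \<and> (\<forall>r. deriv \<alpha> (r + 1) = deriv \<alpha> r)
     \<and> bdd_above (range (\<lambda>r. \<bar>deriv \<alpha> r\<bar>))"
proof -
  from sm have d1: "\<forall>x. \<alpha> differentiable at x" and sm2: "smooth1 (deriv \<alpha>)"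
    by (auto elim: smooth1.cases)
  from sm2 have d2: "\<forall>x. deriv \<alpha> differentiable at x" by (auto elim: smooth1.cases)
  have ad: "(\<alpha> has_real_derivative deriv \<alpha> r) (at r)" for r
    using d1 DERIV_deriv_iff_real_differentiable by blast
  have a'c: "continuous_on UNIV (deriv \<alpha>)"
    using d2 by (meson differentiable_at_imp_differentiable_on differentiable_imp_continuous_on)
  have ac: "continuous_on UNIV \<alpha>"
    using d1 by (meson differentiable_at_imp_differentiable_on differentiable_imp_continuous_on)
  define f where "f r = \<alpha> (r + 1) - \<alpha> r" for r
  have fc: "continuous_on UNIV f" unfolding f_def
    by (intro continuous_intros continuous_on_compose2[OF ac]) auto
  have "f constant_on UNIV"
  proof (rule continuous_discrete_range_constant[OF connected_UNIV fc])
    fix x :: real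
    show "\<exists>e>0. \<forall>y. y \<in> UNIV \<and> f y \<noteq> f x \<longrightarrow> e \<le> norm (f y - f x)"
      using ints_sep ai unfolding f_def by (intro exI[of _ 1]) auto
  qed
  then obtain c where c: "\<And>r. f r = c" unfolding constant_on_def by auto
  have "c \<in> \<int>" using ai[rule_format, of 0] c[of 0] unfolding f_def by simp
  then obtain m where m: "c = of_int m" by (metis Ints_cases)
  have aper: "\<alpha> (r + 1) = \<alpha> r + of_int m" for r using c[of r] m unfolding f_def by simp
  have a'per: "deriv \<alpha> (r + 1) = deriv \<alpha> r" for r
  proof -
    have "((\<lambda>r. \<alpha> (r + 1)) has_real_derivative deriv \<alpha> (r + 1)) (at r)"
      using ad[of "r + 1"] DERIV_shift by blast
    moreover have "((\<lambda>r. \<alpha> (r + 1)) has_real_derivative deriv \<alpha> r) (at r)"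
      unfolding aper using ad[of r] by (auto intro!: derivative_eq_intros)
    ultimately show ?thesis using DERIV_unique by blast
  qed
  have "bounded (deriv \<alpha> ` {0..1})"
    by (rule compact_imp_bounded[OF compact_continuous_image[OF continuous_on_subset[OF a'c] compact_Icc]]) auto
  then obtain B where B0: "\<forall>t\<in>{0..1}. \<bar>deriv \<alpha> t\<bar> \<le> B"
    unfolding bounded_iff by auto
  have B: "\<bar>deriv \<alpha> t\<bar> \<le> B" if "t \<in> {0..1}" for t using B0 that by blast
  have "\<bar>deriv \<alpha> r\<bar> \<le> B" for r
  proof -
    have "deriv \<alpha> r = deriv \<alpha> ((r - of_int \<lfloor>r\<rfloor>) + of_int \<lfloor>r\<rfloor>)" by simp
    also have "\<dots> = deriv \<alpha> (r - of_int \<lfloor>r\<rfloor>)" by (rule per_real[of "deriv \<alpha>", OF a'per])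
    finally show ?thesis using B[of "r - of_int \<lfloor>r\<rfloor>"]
      using of_int_floor_le[of r] real_of_int_floor_add_one_gt[of r] by simp
  qed
  then have "bdd_above (range (\<lambda>r. \<bar>deriv \<alpha> r\<bar>))" by (intro bdd_aboveI[where M=B]) auto
  then show ?thesis using ad a'c aper a'per by blast
qed

lemma arith1:
  fixes \<eta> M \<epsilon> :: real
  assumes "0 \<le> \<eta>" "0 \<le> M" "0 < \<epsilon>" "\<epsilon> \<le> 1"
  shows "2 * \<eta> * M + (2 * \<eta>) * (pi / \<epsilon>) \<le> (4 * M + 16) * \<eta> / \<epsilon>"
proof -
  have A: "\<eta> * M * \<epsilon> \<le> \<eta> * M" using assms by (simp add: mult_right_le_one_le)
  have B: "\<eta> * pi \<le> \<eta> * 4" using assms pi_less_4 by (simp add: mult_left_mono)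
  have "(2 * \<eta> * M + (2 * \<eta>) * (pi / \<epsilon>)) * \<epsilon> = 2 * (\<eta> * M * \<epsilon>) + 2 * (\<eta> * pi)"
    using assms by (simp add: field_simps)
  also have "\<dots> \<le> 4 * (\<eta> * M) + 16 * \<eta>"
    using A B mult_nonneg_nonneg[OF assms(1,2)] assms(1) by linarith
  also have "\<dots> = (4 * M + 16) * \<eta>" by (simp add: algebra_simps)
  finally show ?thesis using assms by (simp add: pos_le_divide_eq)
qed

lemma arith2:
  fixes \<eta> M \<epsilon> :: real
  assumes "0 \<le> \<eta>" "0 \<le> M" "0 < \<epsilon>" "\<epsilon> \<le> 1"
  shows "4 * \<eta> * M + (4 * \<eta> / \<epsilon>) * (pi / \<epsilon>) \<le> (4 * M + 16) * \<eta> / \<epsilon>^2"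
proof -
  have e2: "\<epsilon>^2 \<le> 1" "0 < \<epsilon>^2" using assms by (auto simp: power_le_one)
  have A: "\<eta> * M * \<epsilon>^2 \<le> \<eta> * M" using assms e2 by (simp add: mult_right_le_one_le)
  have B: "\<eta> * pi \<le> \<eta> * 4" using assms pi_less_4 by (simp add: mult_left_mono)
  have "(4 * \<eta> * M + (4 * \<eta> / \<epsilon>) * (pi / \<epsilon>)) * \<epsilon>^2 = 4 * (\<eta> * M * \<epsilon>^2) + 4 * (\<eta> * pi)"
    using assms by (simp add: field_simps power2_eq_square)
  also have "\<dots> \<le> 4 * (\<eta> * M) + 16 * \<eta>"
    using A B mult_nonneg_nonneg[OF assms(1,2)] assms(1) by linarith
  also have "\<dots> = (4 * M + 16) * \<eta>" by (simp add: algebra_simps)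
  finally show ?thesis using e2 by (simp add: pos_le_divide_eq)
qed

theorem lemma3:
  fixes k :: "real \<Rightarrow> real^3 \<Rightarrow> real^3"
  assumes "admissible_kernel k"
  shows "\<exists>C. \<forall>\<epsilon> \<Gamma> \<alpha>. 0 < \<epsilon> \<and> \<epsilon> \<le> 1 \<and> smooth1 \<alpha> \<and> (\<forall>r. \<alpha> (r + 1) - \<alpha> r \<in> \<int>) \<and>
            (SUP r. \<bar>deriv \<alpha> r\<bar>) \<le> 1 \<longrightarrow>
       (\<forall>r. \<bar>vel0 k \<epsilon> \<Gamma> \<alpha> (gamma0 \<alpha> r) $ 1\<bar> \<le> C * \<bar>\<Gamma>\<bar> * (SUP r. \<bar>deriv \<alpha> r\<bar>) / \<epsilon>) \<and>
       (\<forall>x. \<exists>D. ((\<lambda>t. vel0 k \<epsilon> \<Gamma> \<alpha> (x + t *\<^sub>R axis 3 1)) has_vector_derivative D) (at 0) \<and>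
              norm D \<le> C * \<bar>\<Gamma>\<bar> * (SUP r. \<bar>deriv \<alpha> r\<bar>) / \<epsilon> ^ 2)"
proof -
  from assms have A1: "\<And>\<epsilon>. \<epsilon> > 0 \<Longrightarrow> smooth3 (k \<epsilon>)"
    and A2: "\<And>\<epsilon> x i. \<epsilon> > 0 \<Longrightarrow> k \<epsilon> (x + axis i 1) = k \<epsilon> x"
    and A4: "\<And>\<epsilon> x i j. \<epsilon> > 0 \<Longrightarrow> k \<epsilon> (refl3 j x) $ i = (if i = j then -1 else 1) * (k \<epsilon> x $ i)"
    unfolding admissible_kernel_def by blast+
  from assms obtain M0 where A3: "\<And>\<epsilon> x. \<epsilon> > 0 \<Longrightarrow> x \<in> fund_box \<Longrightarrow>
      norm (k \<epsilon> x - bs_main \<epsilon> x) \<le> M0 \<and>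
      (\<forall>i. norm (frechet_derivative (\<lambda>y. k \<epsilon> y - bs_main \<epsilon> y) (at x) (axis i 1)) \<le> M0)"
    unfolding admissible_kernel_def by blast
  define M where "M = max M0 0"
  show ?thesis
  proof (rule exI[of _ "4 * M + 16"], intro allI impI)
    fix \<epsilon> \<Gamma> :: real and \<alpha> :: "real \<Rightarrow> real"
    assume H: "0 < \<epsilon> \<and> \<epsilon> \<le> 1 \<and> smooth1 \<alpha> \<and> (\<forall>r. \<alpha> (r + 1) - \<alpha> r \<in> \<int>) \<and> (SUP r. \<bar>deriv \<alpha> r\<bar>) \<le> 1"
    define \<eta> where "\<eta> = (SUP r. \<bar>deriv \<alpha> r\<bar>)"
    have e0: "0 < \<epsilon>" and e1: "\<epsilon> \<le> 1" and eta1: "\<eta> \<le> 1" using H unfolding \<eta>_def by auto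
    obtain m :: int where ad: "\<And>r. (\<alpha> has_real_derivative deriv \<alpha> r) (at r)"
      and a'c: "continuous_on UNIV (deriv \<alpha>)" and aper: "\<And>r. \<alpha> (r + 1) = \<alpha> r + of_int m"
      and a'per: "\<And>r. deriv \<alpha> (r + 1) = deriv \<alpha> r" and bdd: "bdd_above (range (\<lambda>r. \<bar>deriv \<alpha> r\<bar>))"
      using alpha_facts[of \<alpha>] H by blast
    have a'bd: "\<bar>deriv \<alpha> r\<bar> \<le> \<eta>" for r unfolding \<eta>_def by (rule cSUP_upper[OF UNIV_I bdd])
    have sm: "smooth3 (k \<epsilon>)" using A1 e0 by blast
    have Kdiff: "\<And>x. k \<epsilon> differentiable at x" using sm by (auto elim: smooth3.cases)
    have Kdc: "continuous_on UNIV (\<lambda>x. frechet_derivative (k \<epsilon>) (at x) (axis i 1))" for i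
    proof -
      have "smooth3 (\<lambda>x. frechet_derivative (k \<epsilon>) (at x) (axis i 1))" using sm by (auto elim: smooth3.cases)
      then have "\<forall>x. (\<lambda>x. frechet_derivative (k \<epsilon>) (at x) (axis i 1)) differentiable at x"
        by (auto elim: smooth3.cases)
      then show ?thesis by (meson differentiable_at_imp_differentiable_on differentiable_imp_continuous_on)
    qed
    interpret kern "k \<epsilon>" \<epsilon> M
    proof
      show "\<And>x. k \<epsilon> differentiable at x" by (rule Kdiff)
      show "\<And>i. continuous_on UNIV (\<lambda>x. frechet_derivative (k \<epsilon>) (at x) (axis i 1))" by (rule Kdc)
      show "\<And>x i. k \<epsilon> (x + axis i 1) = k \<epsilon> x" using A2 e0 by blast
      show "\<And>x. x \<in> fund_box \<Longrightarrow> norm (k \<epsilon> x - bs_main \<epsilon> x) \<le> M"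
        using A3 e0 unfolding M_def by (meson max.coboundedI1)
      show "\<And>x i. x \<in> fund_box \<Longrightarrow> norm (frechet_derivative (\<lambda>y. k \<epsilon> y - bs_main \<epsilon> y) (at x) (axis i 1)) \<le> M"
        using A3 e0 unfolding M_def by (meson max.coboundedI1)
      show "\<And>x i j. k \<epsilon> (refl3 j x) $ i = (if i = j then -1 else 1) * k \<epsilon> x $ i" using A4 e0 by blast
    qed (use e0 e1 in \<open>auto simp: M_def\<close>)
    interpret curve "k \<epsilon>" \<epsilon> M \<alpha> \<eta> m
      by unfold_locales (use ad a'c aper a'per a'bd eta1 in auto)
    have M0': "0 \<le> M" unfolding M_def by simp
    show "(\<forall>r. \<bar>vel0 k \<epsilon> \<Gamma> \<alpha> (gamma0 \<alpha> r) $ 1\<bar> \<le> (4 * M + 16) * \<bar>\<Gamma>\<bar> * (SUP r. \<bar>deriv \<alpha> r\<bar>) / \<epsilon>) \<and>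
       (\<forall>x. \<exists>D. ((\<lambda>t. vel0 k \<epsilon> \<Gamma> \<alpha> (x + t *\<^sub>R axis 3 1)) has_vector_derivative D) (at 0) \<and>
              norm D \<le> (4 * M + 16) * \<bar>\<Gamma>\<bar> * (SUP r. \<bar>deriv \<alpha> r\<bar>) / \<epsilon> ^ 2)"
      unfolding \<eta>_def[symmetric]
    proof (intro conjI allI)
      fix r0
      have "\<bar>vel0 k \<epsilon> \<Gamma> \<alpha> (gamma0 \<alpha> r0) $ 1\<bar>
          = \<bar>\<Gamma>\<bar> * \<bar>(integral {0..1} (\<lambda>r. cross3 (k \<epsilon> (gamma0 \<alpha> r0 - gamma0 \<alpha> r)) (g r))) $ 1\<bar>"
        unfolding vel0_def by (simp add: abs_mult)
      also have "\<dots> \<le> \<bar>\<Gamma>\<bar> * (2 * \<eta> * M + (2 * \<eta>) * (pi / \<epsilon>))"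
        by (intro mult_left_mono claim1) auto
      also have "\<dots> \<le> \<bar>\<Gamma>\<bar> * ((4 * M + 16) * \<eta> / \<epsilon>)"
        by (intro mult_left_mono arith1 eta0 M0' e0 e1) auto
      finally show "\<bar>vel0 k \<epsilon> \<Gamma> \<alpha> (gamma0 \<alpha> r0) $ 1\<bar> \<le> (4 * M + 16) * \<bar>\<Gamma>\<bar> * \<eta> / \<epsilon>"
        by (simp add: algebra_simps)
    next
      fix x :: "real^3"
      let ?I = "integral {0..1} (\<lambda>r. cross3 (frechet_derivative (k \<epsilon>) (at (x - gamma0 \<alpha> r)) (axis 3 1)) (g r))"
      have "((\<lambda>t. vel0 k \<epsilon> \<Gamma> \<alpha> (x + t *\<^sub>R axis 3 1)) has_vector_derivative \<Gamma> *\<^sub>R ?I) (at 0)"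
        unfolding vel0_def
        by (rule bounded_linear.has_vector_derivative[OF bounded_linear_scaleR_right leib])
      moreover have "norm (\<Gamma> *\<^sub>R ?I) \<le> (4 * M + 16) * \<bar>\<Gamma>\<bar> * \<eta> / \<epsilon> ^ 2"
      proof -
        have "norm (\<Gamma> *\<^sub>R ?I) = \<bar>\<Gamma>\<bar> * norm ?I" by simp
        also have "\<dots> \<le> \<bar>\<Gamma>\<bar> * (4 * \<eta> * M + (4 * \<eta> / \<epsilon>) * (pi / \<epsilon>))"
          by (intro mult_left_mono Dbound) auto
        also have "\<dots> \<le> \<bar>\<Gamma>\<bar> * ((4 * M + 16) * \<eta> / \<epsilon>^2)"
          by (intro mult_left_mono arith2 eta0 M0' e0 e1) auto
        finally show ?thesis by (simp add: algebra_simps)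
      qed
      ultimately show "\<exists>D. ((\<lambda>t. vel0 k \<epsilon> \<Gamma> \<alpha> (x + t *\<^sub>R axis 3 1)) has_vector_derivative D) (at 0) \<and>
              norm D \<le> (4 * M + 16) * \<bar>\<Gamma>\<bar> * \<eta> / \<epsilon> ^ 2" by blast
    qed
  qed
qed


end
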